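(* Let $d\ge2$. Let $C\subseteq\mathbb Z^d$ be a cube and let $\mathcal C$ be a collection of cubes such that $\mathrm{nbhd}(C')\subseteq C$ for every $C'\in\mathcal C$ and $\mathrm{nbhd}(C')\cap\mathrm{nbhd}(C'')=\emptyset$ for all distinct $C',C''\in\mathcal C$. Put $$E=\mathrm{edges}^+(C)\setminus\bigcup\{\mathrm{edges}(\mathrm{nbhd}(C')):C'\in\mathcal C\}.$$ Let $f:\mathbb Z^d\to\mathbb Z$ and let $\varphi:G\to\mathbb R$ be a bounded $f$-flow on the Cayley graph $G$ of $\mathbb Z^d$. Then there exists an $f$-flow $\psi:G\to\mathbb R$ such that: (i) $\mathrm{supp}(\varphi-\psi)\subseteq\mathrm{edges}(\mathrm{nbhd}(C))$; (ii) for every $C'\in\mathcal C$, $(\varphi-\psi)(x,y)=0$ whenever $(x,y)\in\mathrm{edges}^+(C')$ or $(y,x)\in\mathrm{edges}^+(C')$; (iii) $\psi(e)\in\mathbb Z$ for every edge $e\in E$; (iv) $|\varphi-\psi|<6d$ on every edge.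
   Context: $G=\{(x,x')\in\mathbb Z^d\times\mathbb Z^d: x'-x\in\{\pm e_1,\dots,\pm e_d\}\}$ is the Cayley graph of $\mathbb Z^d$; an edge $(x,x')$ is positively oriented if $x'-x=e_j$ for some $j$. For $A\subseteq\mathbb Z^d$: $\mathrm{edges}(A)=\{(x,x+e_j):1\le j\le d,\ \{x,x+e_j\}\subseteq A\}$; $\mathrm{edges}^+(A)=\{(x,x+e_j):1\le j\le d,\ \{x,x+e_j\}\cap A\ne\emptyset\}$; $\mathrm{nbhd}(A)=\{x+y:x\in A,\ y\in\{-1,0,1\}^d\}$. A cube is a set of the form $\{n_1,\dots,n_1+k_1\}\times\dots\times\{n_d,\dots,n_d+k_d\}$ with $n_i\in\mathbb Z$, $k_i\ge0$. An $f$-flow is $\varphi:G\to\mathbb R$ with $\varphi(x,y)=-\varphi(y,x)$ and $f(x)=\sum_{(x,y)\in G}\varphi(x,y)$ for all $x$. For antisymmetric $\eta$, "$\mathrm{supp}(\eta)\subseteq\mathcal E$" for a set $\mathcal E$ of positively oriented edges means $\eta(x,y)=0$ unless $(x,y)\in\mathcal E$ or $(y,x)\in\mathcal E$. *)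

theory Defs
  imports "HOL-Analysis.Analysis"
begin

text \<open>Points of Z^d are vectors of type int^'n, with d = CARD('n).
  The unit vector e_j is axis j 1.\<close>

definition cayley :: "((int^'n) \<times> (int^'n)) set" where
  "cayley = {(x, x'). \<exists>j. x' - x = axis j 1 \<or> x' - x = - axis j 1}"

definition edges :: "(int^'n) set \<Rightarrow> ((int^'n) \<times> (int^'n)) set" where
  "edges A = {(x, x + axis j 1) | x j. x \<in> A \<and> x + axis j 1 \<in> A}"

definition edges_plus :: "(int^'n) set \<Rightarrow> ((int^'n) \<times> (int^'n)) set" where
  "edges_plus A = {(x, x + axis j 1) | x j. x \<in> A \<or> x + axis j 1 \<in> A}"

definition nbhd :: "(int^'n) set \<Rightarrow> (int^'n) set" where
  "nbhd A = {x + y | x y. x \<in> A \<and> (\<forall>i. y $ i \<in> {-1, 0, 1})}"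

definition is_cube :: "(int^'n) set \<Rightarrow> bool" where
  "is_cube C \<longleftrightarrow> (\<exists>n k. (\<forall>i. k $ i \<ge> 0) \<and>
      C = {x. \<forall>i. n $ i \<le> x $ i \<and> x $ i \<le> n $ i + k $ i})"

text \<open>An f-flow: antisymmetric on the Cayley graph with divergence f.
  Only values on edges of the Cayley graph matter.\<close>
definition is_flow :: "(int^'n \<Rightarrow> int) \<Rightarrow> ((int^'n) \<times> (int^'n) \<Rightarrow> real) \<Rightarrow> bool" where
  "is_flow f \<phi> \<longleftrightarrow>
     (\<forall>x y. (x, y) \<in> cayley \<longrightarrow> \<phi> (x, y) = - \<phi> (y, x)) \<and>
     (\<forall>x. real_of_int (f x) = (\<Sum>y\<in>{y. (x, y) \<in> cayley}. \<phi> (x, y)))"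

definition supp_in :: "((int^'n) \<times> (int^'n) \<Rightarrow> real) \<Rightarrow> ((int^'n) \<times> (int^'n)) set \<Rightarrow> bool" where
  "supp_in \<eta> E \<longleftrightarrow> (\<forall>x y. (x, y) \<in> cayley \<longrightarrow> \<eta> (x, y) \<noteq> 0 \<longrightarrow> (x, y) \<in> E \<or> (y, x) \<in> E)"

end

theory Submission
  imports Defs
begin


lemma ax_comp: "axis k (1::int) $ i = (if i = k then 1 else 0)"
  by (simp add: axis_def)

lemma ax_inj: "(x::int^'n) + axis k 1 = x + axis i 1 \<longleftrightarrow> i = k"
  by (auto simp: axis_eq_axis)

lemma ax_nz: "(x::int^'n) \<noteq> x + axis k 1 + axis i 1"
proof
  assume "x = x + axis k 1 + axis i 1"
  hence "x $ k = (x + axis k 1 + axis i 1) $ k" by (rule arg_cong)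
  hence "x $ k = x $ k + 1 + axis i 1 $ k" by (simp only: vector_add_component axis_nth)
  thus False by (simp add: ax_comp split: if_splits)
qed

definition Pc :: "'n \<Rightarrow> (int^'n \<Rightarrow> 'n \<Rightarrow> real) \<Rightarrow> int^'n \<Rightarrow> 'n \<Rightarrow> real" where
 "Pc q c w k = (if k = q then (\<Sum>j\<in>UNIV. if j = q then 0 else c (w - axis j 1) j - c w j)
     else c w k - c (w - axis q 1) k)"

definition eta :: "'n \<Rightarrow> (int^'n \<Rightarrow> 'n \<Rightarrow> real) \<Rightarrow> ((int^'n) \<times> (int^'n)) \<Rightarrow> real" where
 "eta q c e = (\<Sum>k\<in>UNIV. (if snd e = fst e + axis k 1 then Pc q c (fst e) k else 0)
      - (if fst e = snd e + axis k 1 then Pc q c (snd e) k else 0))"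

lemma eta_pos: "eta q c (x, x + axis k 1) = Pc q c x k"
proof -
  have "eta q c (x, x + axis k 1) = (\<Sum>i\<in>UNIV. (if i = k then Pc q c x k else 0))"
    unfolding eta_def using ax_nz[of x k] by (intro sum.cong) (auto simp: ax_inj axis_eq_axis)
  thus ?thesis by simp
qed

lemma eta_neg: "eta q c (x + axis k 1, x) = - Pc q c x k"
proof -
  have "eta q c (x + axis k 1, x) = (\<Sum>i\<in>UNIV. - (if i = k then Pc q c x k else 0))"
    unfolding eta_def using ax_nz[of x k] by (intro sum.cong) (auto simp: ax_inj axis_eq_axis)
  thus ?thesis by (simp add: sum_negf)
qed

lemma eta_antisym: "eta q c (x, y) = - eta q c (y, x)"
  unfolding eta_def fst_conv snd_conv by (simp add: sum_subtractf)

lemma cayley_cases: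
  assumes "(x, y) \<in> cayley"
  obtains k where "y = x + axis k 1" | k where "x = y + axis k 1"
proof -
  from assms obtain j where "y - x = axis j 1 \<or> y - x = - axis j 1" by (auto simp: cayley_def)
  thus ?thesis using that by (metis add_diff_cancel_left' diff_add_cancel minus_diff_eq)
qed

lemma nbrs: "{y. (x, y) \<in> (cayley::((int^'n) \<times> (int^'n)) set)} = range (\<lambda>k. x + axis k 1) \<union> range (\<lambda>k. x - axis k 1)"
  unfolding cayley_def by (auto simp: algebra_simps)

lemma sum_nbrs:
  "(\<Sum>y\<in>{y. (x, y) \<in> (cayley::((int^'n) \<times> (int^'n)) set)}. h y) = (\<Sum>k\<in>UNIV. h (x + axis k 1)) + (\<Sum>k\<in>UNIV. h (x - axis k 1))"
proof -
  have d: "range (\<lambda>k. x + axis k 1) \<inter> range (\<lambda>k. x - axis k (1::int)) = {}"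
  proof (safe)
    fix i k assume "x + axis i 1 = x - axis k 1"
    hence "(x + axis i 1) $ i = (x - axis k 1) $ i" by simp
    thus "x + axis i 1 \<in> {}" by (simp add: ax_comp split: if_splits)
  qed
  have i1: "inj (\<lambda>k. x + axis k (1::int))" by (auto simp: inj_def axis_eq_axis)
  have i2: "inj (\<lambda>k. x - axis k (1::int))" by (auto simp: inj_def axis_eq_axis)
  show ?thesis unfolding nbrs
    by (subst sum.union_disjoint) (use d in \<open>auto simp: sum.reindex[OF i1] sum.reindex[OF i2]\<close>)
qed

lemma div_eta: "(\<Sum>y\<in>{y. (x, y) \<in> cayley}. eta q c (x, y)) = 0"
proof -
  define S where "S w = (\<Sum>j\<in>UNIV. if j = q then 0 else c (w - axis j 1) j - c w j)" for w
  define Q where "Q w k = (if k = q then 0 else c w k - c (w - axis q 1) k)" for w k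
  have PQ: "Pc q c w k = Q w k + (if k = q then S w else 0)" for w k
    by (simp add: Pc_def S_def Q_def)
  have e2: "eta q c (x, x - axis k 1) = - Pc q c (x - axis k 1) k" for k
    using eta_neg[of q c "x - axis k 1" k] by simp
  have "(\<Sum>y\<in>{y. (x, y) \<in> cayley}. eta q c (x, y)) = (\<Sum>k\<in>UNIV. Pc q c x k) - (\<Sum>k\<in>UNIV. Pc q c (x - axis k 1) k)"
    by (simp only: sum_nbrs eta_pos e2 sum_negf)
  also have "\<dots> = ((\<Sum>k\<in>UNIV. Q x k) + S x) - ((\<Sum>k\<in>UNIV. Q (x - axis k 1) k) + S (x - axis q 1))"
    by (simp add: PQ sum.distrib)
  also have "\<dots> = (\<Sum>k\<in>UNIV. Q x k - Q (x - axis k 1) k + ((if k = q then 0 else c (x - axis k 1) k - c x k) - (if k = q then 0 else c (x - axis q 1 - axis k 1) k - c (x - axis q 1) k)))"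
    by (simp add: sum.distrib sum_subtractf S_def)
  also have "\<dots> = 0"
    by (rule sum.neutral) (auto simp: Q_def diff_diff_eq add.commute)
  finally show ?thesis .
qed

lemma flow_add:
  fixes \<phi> :: "((int^'n) \<times> (int^'n)) \<Rightarrow> real" and q :: 'n
  assumes fl: "is_flow f \<phi>"
  shows "is_flow f (\<lambda>e. \<phi> e + eta q c e)"
proof -
  have a: "\<forall>x y. (x, y) \<in> cayley \<longrightarrow> \<phi> (x, y) = - \<phi> (y, x)"
    and d: "\<forall>x. real_of_int (f x) = (\<Sum>y\<in>{y. (x, y) \<in> cayley}. \<phi> (x, y))"
    using fl unfolding is_flow_def by auto
  show ?thesis unfolding is_flow_def
  proof (intro conjI allI impI)
    fix x y :: "int^'n" assume "(x, y) \<in> cayley"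
    thus "\<phi> (x, y) + eta q c (x, y) = - (\<phi> (y, x) + eta q c (y, x))"
      using eta_antisym[of q c x y] a by simp
  next
    fix x :: "int^'n"
    show "real_of_int (f x) = (\<Sum>y\<in>{y. (x, y) \<in> cayley}. \<phi> (x, y) + eta q c (x, y))"
      using d by (simp add: sum.distrib div_eta)
  qed
qed




definition inC :: "int^'n \<Rightarrow> int^'n \<Rightarrow> int^'n \<Rightarrow> bool" where
  "inC a b z \<longleftrightarrow> (\<forall>i. a$i \<le> z$i \<and> z$i \<le> b$i)"
definition inR :: "int^'n \<Rightarrow> int^'n \<Rightarrow> int^'n \<Rightarrow> bool" where
  "inR a b z \<longleftrightarrow> (\<forall>i. a$i - 1 \<le> z$i \<and> z$i \<le> b$i)"
definition inU :: "int^'n \<Rightarrow> int^'n \<Rightarrow> bool" where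
  "inU z u \<longleftrightarrow> (\<forall>i. z$i \<le> u$i \<and> u$i \<le> z$i + 1)"

definition F :: "int^'n \<Rightarrow> int^'n \<Rightarrow> 'n \<Rightarrow> 'n \<Rightarrow> ((int^'n) \<times> (int^'n) \<Rightarrow> real)
   \<Rightarrow> (int^'n \<Rightarrow> 'n \<Rightarrow> real) \<Rightarrow> (int^'n \<Rightarrow> 'n \<Rightarrow> real)" where
 "F a b q m \<phi> c z j = (if j = q then 0
    else if inC a b z \<or> inC a b (z + axis j 1) then frac (c (z - axis q 1) j - \<phi> (z, z + axis j 1))
    else if \<not> inC a b z \<and> inC a b (z + axis q 1) \<and> j = m
      then frac (\<phi> (z, z + axis q 1) + (\<Sum>i\<in>UNIV. if i = q then 0 else c (z - axis i 1) i))
    else 0)"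

lemma inC_R: "inC a b z \<Longrightarrow> inR a b z"
  unfolding inC_def inR_def
proof (intro allI)
  fix i assume h: "\<forall>i. a $ i \<le> z $ i \<and> z $ i \<le> b $ i"
  show "a $ i - 1 \<le> z $ i \<and> z $ i \<le> b $ i" using h[rule_format, of i] by linarith
qed

lemma inC_shift_R: "inC a b (z + axis j 1) \<Longrightarrow> inR a b z"
  unfolding inC_def inR_def
proof (intro allI)
  fix i assume h: "\<forall>i. a $ i \<le> (z + axis j 1) $ i \<and> (z + axis j 1) $ i \<le> b $ i"
  show "a $ i - 1 \<le> z $ i \<and> z $ i \<le> b $ i"
    using h[rule_format, of i] by (auto simp: ax_comp split: if_splits)
qed

lemma F_R: "\<not> inR a b z \<Longrightarrow> F a b q m \<phi> c z j = 0"
  unfolding F_def using inC_R inC_shift_R by metis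

lemma F_cong: assumes h: "\<And>i j'. c (z - axis i 1) j' = c' (z - axis i 1) j'"
  shows "F a b q m \<phi> c z j = F a b q m \<phi> c' z j"
  by (simp only: F_def h)

definition lv :: "int^'n \<Rightarrow> int^'n \<Rightarrow> int" where
  "lv a z = (\<Sum>i\<in>UNIV. z$i - a$i + 1)"

lemma lv_minus: "lv a (z - axis k 1) = lv a z - 1"
proof -
  have "lv a (z - axis k 1) = (\<Sum>i\<in>UNIV. (z$i - a$i + 1) - (if i = k then 1 else 0))"
    unfolding lv_def by (intro sum.cong) (auto simp: ax_comp)
  also have "\<dots> = lv a z - 1" unfolding lv_def by (simp add: sum_subtractf)
  finally show ?thesis .
qed

lemma lv_nonneg: "inR a b z \<Longrightarrow> lv a z \<ge> 0"
  unfolding lv_def inR_def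
proof (intro sum_nonneg)
  fix i assume h: "\<forall>i. a $ i - 1 \<le> z $ i \<and> z $ i \<le> b $ i"
  show "0 \<le> z $ i - a $ i + 1" using h[rule_format, of i] by linarith
qed

lemma lv_le: "inR a b z \<Longrightarrow> lv a z \<le> (\<Sum>i\<in>UNIV. b$i - a$i + 1)"
  unfolding lv_def inR_def by (intro sum_mono) force

lemma iter_R: "\<not> inR a b z \<Longrightarrow> ((F a b q m \<phi> ^^ n) (\<lambda>_ _. 0)) z j = 0"
  by (cases n) (auto simp: F_R)

lemma iter_stab:
  "(inR a b z \<longrightarrow> lv a z < int n) \<Longrightarrow>
     ((F a b q m \<phi> ^^ Suc n) (\<lambda>_ _. 0)) z j = ((F a b q m \<phi> ^^ n) (\<lambda>_ _. 0)) z j"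
proof (induction n arbitrary: z j)
  case 0
  hence "\<not> inR a b z" using lv_nonneg by force
  thus ?case by (simp add: F_R)
next
  case (Suc n)
  show ?case
  proof (cases "inR a b z")
    case False thus ?thesis using iter_R by metis
  next
    case True
    have "((F a b q m \<phi> ^^ Suc n) (\<lambda>_ _. 0)) (z - axis i 1) j' = ((F a b q m \<phi> ^^ n) (\<lambda>_ _. 0)) (z - axis i 1) j'" for i j'
      by (rule Suc.IH) (use Suc.prems True lv_minus[of a z i] in auto)
    hence "F a b q m \<phi> ((F a b q m \<phi> ^^ Suc n) (\<lambda>_ _. 0)) z j = F a b q m \<phi> ((F a b q m \<phi> ^^ n) (\<lambda>_ _. 0)) z j"
      by (intro F_cong) 
    thus ?thesis by simp
  qed
qed

lemma F_range: "0 \<le> F a b q m \<phi> c z j \<and> F a b q m \<phi> c z j < 1"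
  by (simp add: F_def frac_lt_1)

lemma fix_exists:
  "\<exists>c. F a b q m \<phi> c = c \<and> (\<forall>z j. 0 \<le> c z j \<and> c z j < 1) \<and> (\<forall>z j. c z j \<noteq> 0 \<longrightarrow> inR a b z)"
proof -
  define N where "N = nat (\<Sum>i\<in>UNIV. b$i - a$i + 1) + 1"
  define c where "c = (F a b q m \<phi> ^^ N) (\<lambda>_ _. 0)"
  have "F a b q m \<phi> c z j = c z j" for z j
  proof -
    have "inR a b z \<longrightarrow> lv a z < int N" using lv_le[of a b z] unfolding N_def by auto
    from iter_stab[OF this, of q m \<phi> j] show ?thesis unfolding c_def by simp
  qed
  hence fx: "F a b q m \<phi> c = c" by (intro ext)
  have "0 \<le> c z j \<and> c z j < 1" for z j
    using fx[THEN fun_cong, of z, THEN fun_cong, of j] F_range[of a b q m \<phi> c z j] by simp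
  moreover have "c z j \<noteq> 0 \<longrightarrow> inR a b z" for z j
    using fx[THEN fun_cong, of z, THEN fun_cong, of j] F_R by metis
  ultimately show ?thesis using fx by blast
qed




lemma inC_two:
  assumes "inC a b (z + axis j 1)" "inC a b (z + axis q 1)" "j \<noteq> q"
  shows "inC a b z"
  unfolding inC_def
proof
  fix i
  have h1: "a $ i \<le> (z + axis j 1) $ i \<and> (z + axis j 1) $ i \<le> b $ i" using assms(1) by (simp add: inC_def)
  have h2: "a $ i \<le> (z + axis q 1) $ i \<and> (z + axis q 1) $ i \<le> b $ i" using assms(2) by (simp add: inC_def)
  show "a $ i \<le> z $ i \<and> z $ i \<le> b $ i"
  proof (cases "i = j")
    case True thus ?thesis using h2 assms(3) by (simp add: ax_comp)
  next
    case False thus ?thesis using h1 by (simp add: ax_comp)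
  qed
qed

lemma cA:
  assumes fx: "F a b q m \<phi> c = c" and jq: "j \<noteq> q" and h: "inC a b z \<or> inC a b (z + axis j 1)"
  shows "\<phi> (z, z + axis j 1) + Pc q c z j \<in> \<int>"
proof -
  define t where "t = c (z - axis q 1) j - \<phi> (z, z + axis j 1)"
  have "c z j = F a b q m \<phi> c z j" using fx by simp
  also have "\<dots> = frac t" using jq h by (simp add: F_def t_def)
  finally have "\<phi> (z, z + axis j 1) + Pc q c z j = - of_int \<lfloor>t\<rfloor>" using jq by (simp add: Pc_def frac_def t_def)
  thus ?thesis by simp
qed

lemma cB:
  assumes fx: "F a b q m \<phi> c = c" and qm: "q \<noteq> m" and h1: "\<not> inC a b z" and h2: "inC a b (z + axis q 1)"
  shows "\<phi> (z, z + axis q 1) + Pc q c z q \<in> \<int>"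
proof -
  define S where "S = (\<Sum>i\<in>UNIV. if i = q then 0 else c (z - axis i 1) i)"
  have cz: "c z j = (if j = m then frac (\<phi> (z, z + axis q 1) + S) else 0)" if jq: "j \<noteq> q" for j
  proof -
    have "\<not> inC a b (z + axis j 1)" using inC_two[of a b z j q] h1 h2 jq by blast
    moreover have "c z j = F a b q m \<phi> c z j" using fx by simp
    ultimately show ?thesis using jq h1 h2 by (simp add: F_def S_def)
  qed
  have "(\<Sum>j\<in>UNIV. if j = q then 0 else c z j) = (\<Sum>j\<in>UNIV. if j = m then frac (\<phi> (z, z + axis q 1) + S) else 0)"
    using cz qm by (intro sum.cong) auto
  also have "\<dots> = frac (\<phi> (z, z + axis q 1) + S)" by simp
  finally have s2: "(\<Sum>j\<in>UNIV. if j = q then 0 else c z j) = frac (\<phi> (z, z + axis q 1) + S)" .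
  have "Pc q c z q = (\<Sum>j\<in>UNIV. (if j = q then 0 else c (z - axis j 1) j) - (if j = q then 0 else c z j))"
    by (simp add: Pc_def; intro sum.cong; auto)
  also have "\<dots> = S - (\<Sum>j\<in>UNIV. if j = q then 0 else c z j)"
    by (simp add: S_def sum_subtractf)
  finally have "Pc q c z q = S - (\<Sum>j\<in>UNIV. if j = q then 0 else c z j)" .
  hence "\<phi> (z, z + axis q 1) + Pc q c z q = of_int \<lfloor>\<phi> (z, z + axis q 1) + S\<rfloor>"
    using s2 by (simp add: frac_def)
  thus ?thesis by simp
qed

lemma flow_eq:
  fixes \<phi> :: "((int^'n) \<times> (int^'n)) \<Rightarrow> real" and q :: 'n and f :: "int^'n \<Rightarrow> int"
    and c :: "int^'n \<Rightarrow> 'n \<Rightarrow> real" and x :: "int^'n"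
  assumes fl: "is_flow f \<phi>"
  shows "real_of_int (f x) = (\<Sum>k\<in>UNIV. \<phi> (x, x + axis k 1) + Pc q c x k)
            - (\<Sum>k\<in>UNIV. \<phi> (x - axis k 1, x) + Pc q c (x - axis k 1) k)"
proof -
  have a: "\<forall>x y. (x, y) \<in> cayley \<longrightarrow> \<phi> (x, y) = - \<phi> (y, x)"
    and d: "\<forall>x. real_of_int (f x) = (\<Sum>y\<in>{y. (x, y) \<in> cayley}. \<phi> (x, y))"
    using fl unfolding is_flow_def by auto
  have cm: "(x, x - axis k 1) \<in> cayley" for k unfolding cayley_def by auto
  have e2: "eta q c (x, x - axis k 1) = - Pc q c (x - axis k 1) k" for k
    using eta_neg[of q c "x - axis k 1" k] by simp
  have "0 = (\<Sum>k\<in>UNIV. Pc q c x k) - (\<Sum>k\<in>UNIV. Pc q c (x - axis k 1) k)"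
    using div_eta[where x=x and q=q and c=c] by (simp add: sum_nbrs eta_pos e2 sum_negf)
  moreover have "real_of_int (f x) = (\<Sum>k\<in>UNIV. \<phi> (x, x + axis k 1)) - (\<Sum>k\<in>UNIV. \<phi> (x - axis k 1, x))"
  proof -
    have neg: "\<phi> (x, x - axis k 1) = - \<phi> (x - axis k 1, x)" for k using a cm by blast
    have "real_of_int (f x) = (\<Sum>k\<in>UNIV. \<phi> (x, x + axis k 1)) + (\<Sum>k\<in>UNIV. \<phi> (x, x - axis k 1))"
      using d[rule_format, of x] by (simp only: sum_nbrs)
    also have "\<dots> = (\<Sum>k\<in>UNIV. \<phi> (x, x + axis k 1)) + - (\<Sum>k\<in>UNIV. \<phi> (x - axis k 1, x))"
      by (simp only: neg sum_negf)
    finally show ?thesis by simp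
  qed
  ultimately show ?thesis by (simp add: sum.distrib)
qed

lemma cD:
  fixes \<phi> :: "((int^'n) \<times> (int^'n)) \<Rightarrow> real" and q :: 'n and f :: "int^'n \<Rightarrow> int"
    and c :: "int^'n \<Rightarrow> 'n \<Rightarrow> real" and x :: "int^'n"
  assumes fl: "is_flow f \<phi>" and fx: "F a b q m \<phi> c = c" and qm: "q \<noteq> m"
  shows "inC a b x \<Longrightarrow> \<phi> (x, x + axis q 1) + Pc q c x q \<in> \<int>"
proof (induction "nat (x$q - a$q)" arbitrary: x rule: less_induct)
  case less
  define V where "V w k = \<phi> (w, w + axis k 1) + Pc q c w k" for w k
  have eq: "real_of_int (f x) = (\<Sum>k\<in>UNIV. V x k) - (\<Sum>k\<in>UNIV. V (x - axis k 1) k)"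
    using flow_eq[OF fl, of x q c] unfolding V_def by simp
  have "V x q = real_of_int (f x) - (\<Sum>k\<in>UNIV - {q}. V x k) + (\<Sum>k\<in>UNIV. V (x - axis k 1) k)"
    using eq sum.remove[of UNIV q "V x"] by simp
  moreover have "(\<Sum>k\<in>UNIV - {q}. V x k) \<in> \<int>"
    using cA[OF fx] less.prems unfolding V_def by (intro Ints_sum) auto
  moreover have "(\<Sum>k\<in>UNIV. V (x - axis k 1) k) \<in> \<int>"
  proof (intro Ints_sum)
    fix k
    show "V (x - axis k 1) k \<in> \<int>"
    proof (cases "inC a b (x - axis k 1)")
      case True
      show ?thesis
      proof (cases "k = q")
        case False thus ?thesis using cA[OF fx False] True unfolding V_def by blast
      next
        case kq: True
        have "(x - axis q 1) $ q = x $ q - 1" by (simp add: ax_comp)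
        moreover have "a $ q \<le> (x - axis q 1) $ q" using True kq unfolding inC_def by blast
        ultimately have "nat ((x - axis q 1) $ q - a $ q) < nat (x $ q - a $ q)" by simp
        from less.hyps[OF this] True kq show ?thesis unfolding V_def by simp
      qed
    next
      case False
      have xi: "inC a b (x - axis k 1 + axis k 1)" using less.prems by simp
      show ?thesis
      proof (cases "k = q")
        case kq: False thus ?thesis using cA[OF fx kq] xi unfolding V_def by blast
      next
        case kq: True thus ?thesis using cB[OF fx qm False] xi unfolding V_def by blast
      qed
    qed
  qed
  ultimately show ?case unfolding V_def by simp
qed




lemma nb1:
  assumes "inU z u" "inU z v" "v \<in> A"
  shows "u \<in> nbhd A"
proof -
  have "\<forall>i. (u - v) $ i \<in> {-1, 0, 1}"
  proof
    fix i
    have "z$i \<le> u$i \<and> u$i \<le> z$i+1" "z$i \<le> v$i \<and> v$i \<le> z$i + 1" using assms by (auto simp: inU_def)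
    hence "u$i - v$i = -1 \<or> u$i - v$i = 0 \<or> u$i - v$i = 1" by presburger
    thus "(u - v) $ i \<in> {-1, 0, 1}" by auto
  qed
  moreover have "u = v + (u - v)" by simp
  ultimately show ?thesis unfolding nbhd_def using assms(3) by blast
qed

lemma nb2:
  assumes ab: "\<forall>i. a$i \<le> b$i" and r: "inR a b z" and uu: "inU z u"
  shows "u \<in> nbhd {x. inC a b x}"
proof -
  define v where "v = (\<chi> i. max (a$i) (min (b$i) (u$i)))"
  have "inC a b v" using ab by (auto simp: inC_def v_def)
  moreover have "\<forall>i. (u - v) $ i \<in> {-1, 0, 1}"
  proof
    fix i
    have "a$i - 1 \<le> z$i \<and> z$i \<le> b$i" using r by (auto simp: inR_def)
    moreover have "z$i \<le> u$i \<and> u$i \<le> z$i + 1" using uu by (auto simp: inU_def)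
    moreover have "a$i \<le> b$i" using ab by auto
    ultimately have "u$i - max (a$i) (min (b$i) (u$i)) = -1 \<or> u$i - max (a$i) (min (b$i) (u$i)) = 0 \<or> u$i - max (a$i) (min (b$i) (u$i)) = 1"
      by (simp add: max_def min_def) presburger
    thus "(u - v) $ i \<in> {-1, 0, 1}" by (auto simp: v_def)
  qed
  moreover have "u = v + (u - v)" by simp
  ultimately show ?thesis unfolding nbhd_def by blast
qed

lemma inU_self: "inU w w" "inU w (w + axis k 1)"
  by (auto simp: inU_def ax_comp)

lemma inU_m1: "k \<noteq> q \<Longrightarrow> inU (w - axis q 1) w"  "k \<noteq> q \<Longrightarrow> inU (w - axis q 1) (w + axis k 1)"
  by (auto simp: inU_def ax_comp)

lemma Pc_local:
  assumes h: "\<And>z j. inU z w \<Longrightarrow> inU z (w + axis k 1) \<Longrightarrow> c' z j = c z j"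
  shows "Pc q c' w k = Pc q c w k"
proof (cases "k = q")
  case True
  have "(\<Sum>j\<in>UNIV. if j = q then 0 else c' (w - axis j 1) j - c' w j) = (\<Sum>j\<in>UNIV. if j = q then 0 else c (w - axis j 1) j - c w j)"
  proof (intro sum.cong refl)
    fix j
    show "(if j = q then 0 else c' (w - axis j 1) j - c' w j) = (if j = q then 0 else c (w - axis j 1) j - c w j)"
    proof (cases "j = q")
      case False
      hence "inU (w - axis j 1) w" "inU (w - axis j 1) (w + axis k 1)" using True inU_m1[of q j w] by auto
      hence e1: "c' (w - axis j 1) j = c (w - axis j 1) j" using h by blast
      have e2: "c' w j = c w j" using h[OF inU_self(1) inU_self(2)] by blast
      show ?thesis using e1 e2 by simp
    qed simp
  qed
  thus ?thesis using True by (simp add: Pc_def)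
next
  case False
  have "c' w k = c w k" using h[OF inU_self(1) inU_self(2)] .
  moreover have "c' (w - axis q 1) k = c (w - axis q 1) k" using h[OF inU_m1[OF False]] .
  ultimately show ?thesis using False by (simp add: Pc_def)
qed

lemma Pc_zero:
  assumes h: "\<And>z j. inU z w \<Longrightarrow> inU z (w + axis k 1) \<Longrightarrow> c' z j = 0"
  shows "Pc q c' w k = 0"
proof -
  have "Pc q c' w k = Pc q (\<lambda>_ _. 0) w k" by (rule Pc_local) (use h in auto)
  also have "\<dots> = 0" unfolding Pc_def by (simp add: sum.neutral)
  finally show ?thesis .
qed

lemma Pc_bound:
  fixes c :: "int^'n \<Rightarrow> 'n \<Rightarrow> real"
  assumes cb: "\<forall>z j. \<bar>c z j\<bar> \<le> 1"
  shows "\<bar>Pc q c w k\<bar> \<le> 2 * real CARD('n)"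
proof (cases "k = q")
  case True
  have "\<bar>\<Sum>j\<in>UNIV. if j = q then 0 else c (w - axis j 1) j - c w j\<bar> \<le> (\<Sum>j\<in>UNIV. \<bar>if j = q then 0 else c (w - axis j 1) j - c w j\<bar>)"
    by (rule sum_abs)
  also have "\<dots> \<le> (\<Sum>j\<in>(UNIV::'n set). 2)"
  proof (intro sum_mono)
    fix j :: 'n
    have "\<bar>c (w - axis j 1) j\<bar> \<le> 1" "\<bar>c w j\<bar> \<le> 1" using cb by auto
    thus "\<bar>if j = q then 0 else c (w - axis j 1) j - c w j\<bar> \<le> 2" by auto
  qed
  finally show ?thesis using True by (simp add: Pc_def)
next
  case False
  have "\<bar>c w k\<bar> \<le> 1" "\<bar>c (w - axis q 1) k\<bar> \<le> 1" using cb by auto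
  moreover have "real CARD('n) \<ge> 1" by (simp add: Suc_le_eq)
  moreover have "\<bar>c w k - c (w - axis q 1) k\<bar> \<le> \<bar>c w k\<bar> + \<bar>c (w - axis q 1) k\<bar>" by (rule abs_triangle_ineq4)
  ultimately have "\<bar>c w k - c (w - axis q 1) k\<bar> \<le> 2 * real CARD('n)" by linarith
  thus ?thesis using False by (simp add: Pc_def)
qed

lemma eta_bound:
  fixes c :: "int^'n \<Rightarrow> 'n \<Rightarrow> real"
  assumes cb: "\<forall>z j. \<bar>c z j\<bar> \<le> 1" and e: "(x, y) \<in> cayley"
  shows "\<bar>eta q c (x, y)\<bar> \<le> 2 * real CARD('n)"
  using e
proof (cases rule: cayley_cases)
  case (1 k) thus ?thesis using Pc_bound[OF cb] by (simp add: eta_pos)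
next
  case (2 k) thus ?thesis using Pc_bound[OF cb] by (simp add: eta_neg)
qed




theorem mainTheorem6:
  fixes C :: "(int^'n) set" and CC :: "(int^'n) set set"
    and f :: "int^'n \<Rightarrow> int" and \<phi> :: "(int^'n) \<times> (int^'n) \<Rightarrow> real"
  assumes d2: "CARD('n) \<ge> 2"
    and cube: "is_cube C"
    and cubes: "\<forall>C'\<in>CC. is_cube C'"
    and inC: "\<forall>C'\<in>CC. nbhd C' \<subseteq> C"
    and disj: "\<forall>C'\<in>CC. \<forall>C''\<in>CC. C' \<noteq> C'' \<longrightarrow> nbhd C' \<inter> nbhd C'' = {}"
    and flow: "is_flow f \<phi>"
    and bdd: "\<exists>B. \<forall>e\<in>cayley. \<bar>\<phi> e\<bar> \<le> B"
  shows "\<exists>\<psi>. is_flow f \<psi> \<and>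
     supp_in (\<lambda>e. \<phi> e - \<psi> e) (edges (nbhd C)) \<and>
     (\<forall>C'\<in>CC. \<forall>x y. (x, y) \<in> cayley \<longrightarrow>
        ((x, y) \<in> edges_plus C' \<or> (y, x) \<in> edges_plus C') \<longrightarrow> \<phi> (x, y) - \<psi> (x, y) = 0) \<and>
     (\<forall>e\<in>edges_plus C - (\<Union>C'\<in>CC. edges (nbhd C')). \<psi> e \<in> \<int>) \<and>
     (\<forall>e\<in>cayley. \<bar>\<phi> e - \<psi> e\<bar> < 6 * real CARD('n))"
proof -
  obtain q :: 'n where True by blast
  have "UNIV - {q} \<noteq> {}"
  proof
    assume "UNIV - {q} = {}"
    hence "(UNIV::'n set) = {q}" by blast
    hence "card (UNIV::'n set) = card {q}" by (rule arg_cong)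
    hence "CARD('n) = 1" by simp
    thus False using d2 by simp
  qed
  then obtain m where "m \<in> UNIV - {q}" by blast
  hence qm: "q \<noteq> m" by blast
  obtain n k where k0: "\<forall>i. k$i \<ge> 0" and Ceq: "C = {x. \<forall>i. n$i \<le> x$i \<and> x$i \<le> n$i + k$i}"
    using cube unfolding is_cube_def by blast
  define a where "a = n"
  define b where "b = n + k"
  have Cx: "x \<in> C \<longleftrightarrow> inC a b x" for x by (simp add: Ceq inC_def a_def b_def)
  have Cs: "C = {x. inC a b x}" using Cx by blast
  have ab: "\<forall>i. a$i \<le> b$i" using k0 by (simp add: a_def b_def)
  obtain c where fx: "F a b q m \<phi> c = c" and cb: "\<forall>z j. 0 \<le> c z j \<and> c z j < 1"
      and cR: "\<forall>z j. c z j \<noteq> 0 \<longrightarrow> inR a b z"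
    using fix_exists[where a=a and b=b and q=q and m=m and \<phi>=\<phi>] by (elim exE conjE)
  define bad where "bad z = (\<exists>C'\<in>CC. \<exists>v\<in>C'. inU z v)" for z
  define c' where "c' z j = (if bad z then 0 else c z j)" for z j
  define \<psi> where "\<psi> e = \<phi> e + eta q c' e" for e
  have cb': "\<forall>z j. \<bar>c' z j\<bar> \<le> 1"
  proof (intro allI)
    fix z j
    have "0 \<le> c z j \<and> c z j < 1" using cb by blast
    thus "\<bar>c' z j\<bar> \<le> 1" by (simp add: c'_def)
  qed
  have dif: "\<phi> e - \<psi> e = - eta q c' e" for e by (simp add: \<psi>_def)
  have V: "\<phi> (x, x + axis j 1) + Pc q c x j \<in> \<int>" if h: "inC a b x \<or> inC a b (x + axis j 1)" for x j
  proof (cases "j = q")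
    case False thus ?thesis using cA[OF fx False h] by blast
  next
    case True
    show ?thesis
    proof (cases "inC a b x")
      case True2: True thus ?thesis using cD[OF flow fx qm True2] True by simp
    next
      case False thus ?thesis using cB[OF fx qm False] h True by simp
    qed
  qed
  have edg: "(x, x + axis k 1) \<in> edges A" if "x \<in> A" "x + axis k 1 \<in> A" for x k A
    using that unfolding edges_def by blast
  show ?thesis
  proof (intro exI[of _ \<psi>] conjI)
    show "is_flow f \<psi>" unfolding \<psi>_def by (rule flow_add[OF flow])
  next
    show "supp_in (\<lambda>e. \<phi> e - \<psi> e) (edges (nbhd C))"
      unfolding supp_in_def
    proof (intro allI impI)
      fix x y assume xy: "(x, y) \<in> cayley" and nz: "\<phi> (x, y) - \<psi> (x, y) \<noteq> 0"
      have key: "(w, w + axis l 1) \<in> edges (nbhd C)" if pnz: "Pc q c' w l \<noteq> 0" for w l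
      proof -
        have "\<not> (\<forall>z j. inU z w \<longrightarrow> inU z (w + axis l 1) \<longrightarrow> c' z j = 0)"
        proof
          assume "\<forall>z j. inU z w \<longrightarrow> inU z (w + axis l 1) \<longrightarrow> c' z j = 0"
          hence "Pc q c' w l = 0" by (intro Pc_zero) blast
          thus False using pnz by simp
        qed
        then obtain z j where z: "inU z w" "inU z (w + axis l 1)" "c' z j \<noteq> 0" by blast
        hence "c z j \<noteq> 0" by (auto simp: c'_def split: if_splits)
        hence "inR a b z" using cR by blast
        hence "w \<in> nbhd C" "w + axis l 1 \<in> nbhd C" using nb2[OF ab _ z(1)] nb2[OF ab _ z(2)] Cs by auto
        thus ?thesis by (rule edg)
      qed
      from xy show "(x, y) \<in> edges (nbhd C) \<or> (y, x) \<in> edges (nbhd C)"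
      proof (cases rule: cayley_cases)
        case (1 l) thus ?thesis using nz key[of x l] by (simp add: dif eta_pos)
      next
        case (2 l) thus ?thesis using nz key[of y l] by (simp add: dif eta_neg)
      qed
    qed
  next
    show "\<forall>C'\<in>CC. \<forall>x y. (x, y) \<in> cayley \<longrightarrow>
        ((x, y) \<in> edges_plus C' \<or> (y, x) \<in> edges_plus C') \<longrightarrow> \<phi> (x, y) - \<psi> (x, y) = 0"
    proof (intro ballI allI impI)
      fix C' x y assume C': "C' \<in> CC" and xy: "(x, y) \<in> cayley"
        and ep: "(x, y) \<in> edges_plus C' \<or> (y, x) \<in> edges_plus C'"
      have zero: "Pc q c' w l = 0" if "w \<in> C' \<or> w + axis l 1 \<in> C'" for w l
      proof (rule Pc_zero)
        fix z j assume "inU z w" "inU z (w + axis l 1)"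
        hence "bad z" using that C' unfolding bad_def by blast
        thus "c' z j = 0" by (simp add: c'_def)
      qed
      from ep show "\<phi> (x, y) - \<psi> (x, y) = 0"
      proof
        assume "(x, y) \<in> edges_plus C'"
        then obtain w l where "(x, y) = (w, w + axis l 1)" "w \<in> C' \<or> w + axis l 1 \<in> C'"
          unfolding edges_plus_def by blast
        thus ?thesis using zero by (simp add: dif eta_pos)
      next
        assume "(y, x) \<in> edges_plus C'"
        then obtain w l where "(y, x) = (w, w + axis l 1)" "w \<in> C' \<or> w + axis l 1 \<in> C'"
          unfolding edges_plus_def by blast
        thus ?thesis using zero by (simp add: dif eta_neg)
      qed
    qed
  next
    show "\<forall>e\<in>edges_plus C - (\<Union>C'\<in>CC. edges (nbhd C')). \<psi> e \<in> \<int>"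
    proof
      fix e assume e: "e \<in> edges_plus C - (\<Union>C'\<in>CC. edges (nbhd C'))"
      then obtain x j where ex: "e = (x, x + axis j 1)" and xc: "x \<in> C \<or> x + axis j 1 \<in> C"
        unfolding edges_plus_def by blast
      have loc: "Pc q c' x j = Pc q c x j"
      proof (rule Pc_local)
        fix z l assume z1: "inU z x" and z2: "inU z (x + axis j 1)"
        have "\<not> bad z"
        proof
          assume "bad z"
          then obtain C' v where C': "C' \<in> CC" "v \<in> C'" "inU z v" unfolding bad_def by blast
          hence "x \<in> nbhd C'" "x + axis j 1 \<in> nbhd C'" using nb1 z1 z2 by blast+
          hence "e \<in> edges (nbhd C')" using ex edg by blast
          thus False using e C' by blast
        qed
        thus "c' z l = c z l" by (simp add: c'_def)
      qed
      have "\<psi> e = \<phi> (x, x + axis j 1) + Pc q c x j" using loc by (simp add: \<psi>_def ex eta_pos)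
      thus "\<psi> e \<in> \<int>" using V[of x j] xc Cx by simp
    qed
  next
    show "\<forall>e\<in>cayley. \<bar>\<phi> e - \<psi> e\<bar> < 6 * real CARD('n)"
    proof
      fix e :: "(int^'n) \<times> (int^'n)" assume "e \<in> cayley"
      then obtain x y where xy: "e = (x, y)" "(x, y) \<in> cayley" by (cases e) auto
      have "\<bar>eta q c' (x, y)\<bar> \<le> 2 * real CARD('n)" by (rule eta_bound[OF cb' xy(2)])
      moreover have "2 \<le> real CARD('n)" using d2 by simp
      moreover have "\<bar>\<phi> e - \<psi> e\<bar> = \<bar>eta q c' (x, y)\<bar>" using xy by (simp add: dif)
      ultimately show "\<bar>\<phi> e - \<psi> e\<bar> < 6 * real CARD('n)" by linarith
    qed
  qed
qed


end
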